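(* In the computational model where dictionary lookup for a key of length $r$ costs $O(r)$ expected time, for a query Pauli string $P$ of weight $w$, computing \[ Z=\sum_{A\subseteq\operatorname{supp}(P)}(-2)^{|A|}\sum_{a\in\mathcal{L}_P(A)}D[(A,a)],\qquad \text{and returning } (N-Z)/2, \] by enumerating all $A\subseteq\operatorname{supp}(P)$ and all $a\in\mathcal{L}_P(A)$, performs exactly $3^w$ dictionary lookups and takes $O(w3^w)$ expected time. Here $\mathcal{L}_P(A)=\{a:A\to\{X,Y,Z\}: a(j)\neq P_j\ \forall j\in A\}$.
   Context: A phase-free $n$-qubit Pauli string is a word $P=(P_1,\dots,P_n)\in\{I,X,Y,Z\}^n$, stored sparsely as the pairs $(j,P_j)$ for $j$ in its support $\operatorname{supp}(P)=\{j:P_j\neq I\}$; its weight is $w=|\operatorname{supp}(P)|$. $D$ is a dictionary whose keys are labeled patterns $(A,a)$ with $A$ a set of qubit positions and $a:A\to\{X,Y,Z\}$, of length $|A|$, mapping to integer counts (absent keys count as zero); $N$ is an integer. *)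

theory Defs
  imports Complex_Main
begin

datatype pauli = PI | PX | PY | PZ

text \<open>A phase-free n-qubit Pauli string: a word indexed by qubit positions 0..n-1
  (identity outside), stored through its support.\<close>
definition pauli_string :: "nat \<Rightarrow> (nat \<Rightarrow> pauli) \<Rightarrow> bool" where
  "pauli_string n P \<longleftrightarrow> (\<forall>j. n \<le> j \<longrightarrow> P j = PI)"

definition supp :: "(nat \<Rightarrow> pauli) \<Rightarrow> nat set" where
  "supp P = {j. P j \<noteq> PI}"

definition weight :: "(nat \<Rightarrow> pauli) \<Rightarrow> nat" where
  "weight P = card (supp P)"

text \<open>Labeled patterns (A,a): a is a map A \<rightarrow> {X,Y,Z}, represented as a total
  function that is PI outside A. Dictionaries map keys to integer counts
  (absent keys count as zero, i.e. a total function).\<close>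
type_synonym key = "nat set \<times> (nat \<Rightarrow> pauli)"
type_synonym dict = "key \<Rightarrow> int"

definition LP :: "(nat \<Rightarrow> pauli) \<Rightarrow> nat set \<Rightarrow> (nat \<Rightarrow> pauli) set" where
  "LP P A = {a. (\<forall>j\<in>A. a j \<in> {PX, PY, PZ} \<and> a j \<noteq> P j) \<and> (\<forall>j. j \<notin> A \<longrightarrow> a j = PI)}"

definition Zspec :: "dict \<Rightarrow> (nat \<Rightarrow> pauli) \<Rightarrow> int" where
  "Zspec D P = (\<Sum>A\<in>Pow (supp P). (-2) ^ card A * (\<Sum>a\<in>LP P A. D (A, a)))"

fun labels :: "(nat \<Rightarrow> pauli) \<Rightarrow> nat list \<Rightarrow> (nat \<Rightarrow> pauli) list" where
  "labels P [] = [(\<lambda>_. PI)]"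
| "labels P (j # js) = [a(j := b). a \<leftarrow> labels P js, b \<leftarrow> filter (\<lambda>b. b \<noteq> P j) [PX, PY, PZ]]"

definition supp_list :: "(nat \<Rightarrow> pauli) \<Rightarrow> nat list" where
  "supp_list P = sorted_list_of_set (supp P)"

definition lookups :: "(nat \<Rightarrow> pauli) \<Rightarrow> key list" where
  "lookups P = concat (map (\<lambda>js. map (\<lambda>a. (set js, a)) (labels P js)) (subseqs (supp_list P)))"

definition Zalg :: "dict \<Rightarrow> (nat \<Rightarrow> pauli) \<Rightarrow> int" where
  "Zalg D P = sum_list (map (\<lambda>(A, a). (-2) ^ card A * D (A, a)) (lookups P))"

definition algo_result :: "dict \<Rightarrow> int \<Rightarrow> (nat \<Rightarrow> pauli) \<Rightarrow> rat" where
  "algo_result D N P = of_int (N - Zalg D P) / 2"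

text \<open>Cost model. lc r is the (expected) cost of one dictionary lookup with a key
  of length r. Each enumerated key (A,a) additionally costs |A| + 1 for building
  the key and the arithmetic update; computing the support and the final answer
  costs w + 1.\<close>
definition algo_cost :: "(nat \<Rightarrow> real) \<Rightarrow> (nat \<Rightarrow> pauli) \<Rightarrow> real" where
  "algo_cost lc P = (\<Sum>(A, a)\<leftarrow>lookups P. lc (card A) + real (card A) + 1) + real (weight P) + 1"

end

theory Submission
  imports Defs
begin

lemma concat_prod_eq:
  "concat (map (\<lambda>a. map (f a) B) A) = map (case_prod f) (List.product A B)"
  by (induction A) auto

lemma labels_set: "distinct js \<Longrightarrow> set (labels P js) = LP P (set js)"
proof (induction js)
  case Nil
  then show ?case by (auto simp: LP_def)
next
  case (Cons j js)
  have nj: "j \<notin> set js" using Cons by simp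
  show ?case
  proof
    show "set (labels P (j # js)) \<subseteq> LP P (set (j # js))"
    proof
      fix x assume "x \<in> set (labels P (j # js))"
      then obtain a b where ab: "a \<in> set (labels P js)" "b \<in> set (filter (\<lambda>b. b \<noteq> P j) [PX, PY, PZ])"
        "x = a(j := b)" by (simp only: labels.simps set_concat set_map image_image) blast
      have bb: "b \<in> {PX, PY, PZ}" "b \<noteq> P j" using ab(2) by (simp only: set_filter, auto)+
      have aL: "a \<in> LP P (set js)" using ab(1) Cons by simp
      have c1: "\<forall>i\<in>set (j # js). x i \<in> {PX, PY, PZ} \<and> x i \<noteq> P i"
      proof
        fix i assume "i \<in> set (j # js)"
        thus "x i \<in> {PX, PY, PZ} \<and> x i \<noteq> P i"
          using aL ab(3) bb unfolding LP_def by (cases "i = j") auto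
      qed
      have c2: "\<forall>i. i \<notin> set (j # js) \<longrightarrow> x i = PI"
        using aL ab(3) unfolding LP_def by auto
      show "x \<in> LP P (set (j # js))" unfolding LP_def using c1 c2 by blast
    qed
  next
    show "LP P (set (j # js)) \<subseteq> set (labels P (j # js))"
    proof
      fix a assume a: "a \<in> LP P (set (j # js))"
      have "a(j := PI) \<in> LP P (set js)" using a nj by (auto simp: LP_def)
      hence "a(j := PI) \<in> set (labels P js)" using Cons by simp
      moreover have "a j \<in> set (filter (\<lambda>b. b \<noteq> P j) [PX, PY, PZ])"
        using a unfolding LP_def set_filter by auto
      moreover have "a = (a(j := PI))(j := a j)" by simp
      ultimately have "a \<in> fun_upd (a(j := PI)) j ` set (filter (\<lambda>b. b \<noteq> P j) [PX, PY, PZ])"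
        by (metis rev_image_eqI)
      with \<open>a(j := PI) \<in> set (labels P js)\<close> show "a \<in> set (labels P (j # js))"
        by (simp only: labels.simps set_concat set_map image_image) blast
    qed
  qed
qed

lemma labels_distinct: "distinct js \<Longrightarrow> distinct (labels P js)"
proof (induction js)
  case Nil
  then show ?case by simp
next
  case (Cons j js)
  have nj: "j \<notin> set js" using Cons by simp
  have pi: "\<forall>a \<in> set (labels P js). a j = PI"
    using labels_set[of js P] Cons nj by (auto simp: LP_def)
  have "labels P (j # js) = map (\<lambda>(a, b). a(j := b))
          (List.product (labels P js) (filter (\<lambda>b. b \<noteq> P j) [PX, PY, PZ]))"
    by (simp add: concat_prod_eq)
  moreover have "distinct (List.product (labels P js) (filter (\<lambda>b. b \<noteq> P j) [PX, PY, PZ]))"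
    using Cons by (intro distinct_product) auto
  moreover have "inj_on (\<lambda>(a, b). a(j := b))
          (set (List.product (labels P js) (filter (\<lambda>b. b \<noteq> P j) [PX, PY, PZ])))"
  proof (rule inj_onI, clarsimp)
    fix a b a' b'
    assume h: "a \<in> set (labels P js)" "a' \<in> set (labels P js)" "a(j := b) = a'(j := b')"
    have "b = b'" using fun_cong[OF h(3), of j] by simp
    moreover have "a = a'"
    proof
      fix x
      have "a j = PI" "a' j = PI" using pi h(1,2) by blast+
      then show "a x = a' x"
        using fun_cong[OF h(3), of x] by (cases "x = j") auto
    qed
    ultimately show "a = a' \<and> b = b'" by simp
  qed
  ultimately show ?case by (simp add: distinct_map)
qed

lemma labels_length: "set js \<subseteq> supp P \<Longrightarrow> length (labels P js) = 2 ^ length js"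
proof (induction js)
  case Nil then show ?case by simp
next
  case (Cons j js)
  have "P j \<noteq> PI" using Cons by (auto simp: supp_def)
  hence "length (filter (\<lambda>b. b \<noteq> P j) [PX, PY, PZ]) = 2" by (cases "P j") auto
  then show ?case using Cons by (simp add: length_concat o_def sum_list_triv)
qed

lemma subseqs_set_sub: "js \<in> set (subseqs xs) \<Longrightarrow> set js \<subseteq> set xs"
proof -
  assume "js \<in> set (subseqs xs)"
  hence "set js \<in> set ` set (subseqs xs)" by (rule imageI)
  thus ?thesis unfolding subseqs_powset by simp
qed

lemma count_lemma: "set xs \<subseteq> supp P \<Longrightarrow>
   sum_list (map (\<lambda>js. length (labels P js)) (subseqs xs)) = 3 ^ length xs"
proof (induction xs)
  case Nil then show ?case by simp
next
  case (Cons x xs)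
  have IH: "sum_list (map (\<lambda>js. length (labels P js)) (subseqs xs)) = 3 ^ length xs"
    using Cons by simp
  have eq: "length (labels P (x # js)) = 2 * length (labels P js)"
    if js: "js \<in> set (subseqs xs)" for js
  proof -
    have "set js \<subseteq> set xs" using js by (rule subseqs_set_sub)
    hence s1: "set js \<subseteq> supp P" and s2: "set (x # js) \<subseteq> supp P" using Cons.prems by (auto simp del: labels.simps)
    show ?thesis using labels_length[OF s1] labels_length[OF s2] by (simp del: labels.simps)
  qed
  have "map (\<lambda>js. length (labels P (x # js))) (subseqs xs)
       = map (\<lambda>js. 2 * length (labels P js)) (subseqs xs)"
    by (rule map_cong[OF refl]) (rule eq)
  hence "sum_list (map (\<lambda>js. length (labels P (x # js))) (subseqs xs))
       = sum_list (map (\<lambda>js. 2 * length (labels P js)) (subseqs xs))"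
    by (rule arg_cong[where f = sum_list])
  also have "\<dots> = 2 * sum_list (map (\<lambda>js. length (labels P js)) (subseqs xs))"
    by (rule sum_list_const_mult)
  finally have "sum_list (map (\<lambda>js. length (labels P (x # js))) (subseqs xs))
       = 2 * sum_list (map (\<lambda>js. length (labels P js)) (subseqs xs))" .
  moreover have "sum_list (map (\<lambda>js. length (labels P js)) (subseqs (x # xs)))
     = sum_list (map (\<lambda>js. length (labels P (x # js))) (subseqs xs))
       + sum_list (map (\<lambda>js. length (labels P js)) (subseqs xs))"
    by (simp only: subseqs.simps Let_def map_append sum_list_append map_map o_def)
  ultimately show ?case using IH by (simp del: labels.simps)
qed

lemma finite_supp: "pauli_string n P \<Longrightarrow> finite (supp P)"
  unfolding pauli_string_def supp_def
  by (rule finite_subset[of _ "{..<n}"]) (auto simp: not_less[symmetric])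

lemma set_supp_list: "pauli_string n P \<Longrightarrow> set (supp_list P) = supp P"
  using finite_supp by (simp add: supp_list_def)

lemma length_lookups: "pauli_string n P \<Longrightarrow> length (lookups P) = 3 ^ weight P"
proof -
  assume ps: "pauli_string n P"
  have "length (lookups P) = sum_list (map (\<lambda>js. length (labels P js)) (subseqs (supp_list P)))"
    by (simp add: lookups_def length_concat o_def)
  also have "\<dots> = 3 ^ length (supp_list P)"
    using count_lemma set_supp_list[OF ps] by simp
  also have "length (supp_list P) = weight P"
    by (simp add: supp_list_def weight_def)
  finally show ?thesis .
qed

lemma my_sum_list_concat: "sum_list (concat xss) = sum_list (map sum_list xss)"
  by (induction xss) auto

lemma Zalg_eq: "pauli_string n P \<Longrightarrow> Zalg D P = Zspec D P"
proof -
  assume ps: "pauli_string n P"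
  define F where "F = (\<lambda>A. (-2::int) ^ card A * (\<Sum>a\<in>LP P A. D (A, a)))"
  have dxs: "distinct (supp_list P)" by (simp add: supp_list_def)
  have "Zalg D P = sum_list (map (\<lambda>js. sum_list (map (\<lambda>a. (-2) ^ card (set js) * D (set js, a))
          (labels P js))) (subseqs (supp_list P)))"
    by (simp add: Zalg_def lookups_def my_sum_list_concat map_concat o_def)
  also have "\<dots> = sum_list (map (\<lambda>js. F (set js)) (subseqs (supp_list P)))"
  proof (rule arg_cong[where f = sum_list], rule map_cong[OF refl])
    fix js assume "js \<in> set (subseqs (supp_list P))"
    hence dj: "distinct js" using subseqs_distinctD dxs by blast
    have "sum_list (map (\<lambda>a. (-2) ^ card (set js) * D (set js, a)) (labels P js))
       = (\<Sum>a\<in>set (labels P js). (-2) ^ card (set js) * D (set js, a))"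
      by (rule sum_list_distinct_conv_sum_set[OF labels_distinct[OF dj]])
    also have "\<dots> = F (set js)" using labels_set[OF dj]
      by (simp add: F_def sum_distrib_left)
    finally show "sum_list (map (\<lambda>a. (-2) ^ card (set js) * D (set js, a)) (labels P js)) = F (set js)" .
  qed
  also have "\<dots> = sum_list (map F (map set (subseqs (supp_list P))))"
    by (simp add: o_def)
  also have "\<dots> = sum F (set (map set (subseqs (supp_list P))))"
    by (rule sum_list_distinct_conv_sum_set[OF distinct_set_subseqs[OF dxs]])
  also have "\<dots> = sum F (Pow (supp P))"
    by (simp only: set_map subseqs_powset set_supp_list[OF ps])
  finally show ?thesis by (simp add: Zspec_def F_def)
qed

lemma card_lookups: "pauli_string n P \<Longrightarrow> (A, a) \<in> set (lookups P) \<Longrightarrow> card A \<le> weight P"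
proof -
  assume ps: "pauli_string n P" and h: "(A, a) \<in> set (lookups P)"
  then obtain js where "js \<in> set (subseqs (supp_list P))" "A = set js"
    by (auto simp: lookups_def)
  hence "A \<subseteq> supp P" using subseqs_set_sub set_supp_list[OF ps] by blast
  thus ?thesis unfolding weight_def using finite_supp[OF ps] by (rule card_mono[rotated])
qed

theorem lemma5:
  fixes lc :: "nat \<Rightarrow> real" and c :: real
  assumes lookup_cost: "\<forall>r. lc r \<le> c * (real r + 1)"
  shows "\<exists>K::real. \<forall>(n::nat) (P::nat \<Rightarrow> pauli) (D::dict) (N::int).
           pauli_string n P \<longrightarrow>
             algo_result D N P = of_int (N - Zspec D P) / 2
           \<and> length (lookups P) = 3 ^ weight P
           \<and> algo_cost lc P \<le> K * real (max 1 (weight P)) * 3 ^ weight P"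
proof (intro exI allI impI conjI)
  fix n P D N
  assume ps: "pauli_string n P"
  show "algo_result D N P = of_int (N - Zspec D P) / 2"
    by (simp add: algo_result_def Zalg_eq[OF ps])
  show "length (lookups P) = 3 ^ weight P" by (rule length_lookups[OF ps])
  define w where "w = weight P"
  define m where "m = real (max 1 w)"
  have m1: "m \<ge> 1" and wm: "real w + 1 \<le> 2 * m" by (auto simp: m_def)
  have bnd: "lc (card A) + real (card A) + 1 \<le> (\<bar>c\<bar> + 1) * (2 * m)"
    if "(A, a) \<in> set (lookups P)" for A a
  proof -
    have cA: "real (card A) + 1 \<le> 2 * m" using card_lookups[OF ps that] wm w_def by simp
    have "lc (card A) \<le> c * (real (card A) + 1)" using lookup_cost by simp
    also have "\<dots> \<le> \<bar>c\<bar> * (real (card A) + 1)" by (intro mult_right_mono) auto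
    also have "\<dots> \<le> \<bar>c\<bar> * (2 * m)" using cA by (intro mult_left_mono) auto
    finally show ?thesis using cA by (simp add: algebra_simps)
  qed
  have "(\<Sum>(A, a)\<leftarrow>lookups P. lc (card A) + real (card A) + 1)
        \<le> (\<Sum>x\<leftarrow>lookups P. (\<bar>c\<bar> + 1) * (2 * m))"
    by (rule sum_list_mono) (use bnd in auto)
  also have "\<dots> = 3 ^ w * ((\<bar>c\<bar> + 1) * (2 * m))"
    using length_lookups[OF ps] by (simp add: sum_list_triv w_def)
  finally have s: "(\<Sum>(A, a)\<leftarrow>lookups P. lc (card A) + real (card A) + 1)
        \<le> 3 ^ w * ((\<bar>c\<bar> + 1) * (2 * m))" .
  have p: "(1::real) \<le> 3 ^ w" by simp
  have "real w + 1 \<le> 2 * m * 3 ^ w" using wm p m1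
    by (metis dual_order.trans mult_cancel_left1 mult_left_mono less_eq_real_def
        mult_pos_pos zero_less_numeral zero_less_one order_less_le_trans)
  hence "algo_cost lc P \<le> 3 ^ w * ((\<bar>c\<bar> + 1) * (2 * m)) + 2 * m * 3 ^ w"
    using s by (simp add: algo_cost_def w_def)
  also have "\<dots> = (2 * \<bar>c\<bar> + 4) * m * 3 ^ w" by (simp add: algebra_simps)
  finally show "algo_cost lc P \<le> (2 * \<bar>c\<bar> + 4) * real (max 1 (weight P)) * 3 ^ weight P"
    by (simp add: m_def w_def)
qed

end
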